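(* Let $\mathbb V$ be a variation of Hodge structure of weight $-1$ over a complex manifold $X$, endowed with a weak polarization $S$, and let $\nu:X\to J(\mathbb V)$ be a normal function. Then $\nu^*\omega_S$ is a non-negative $(1,1)$-form on $X$.
   Context: $\mathbb V$ has a torsion-free underlying local system $\mathbb V_{\mathbb Z}$ and holomorphic Hodge filtration $\mathcal F^\bullet$ on $\mathcal V=\mathbb V\otimes\mathcal O_X$; weight $-1$ means each fiber is a Hodge structure $V_{\mathbb C}=\bigoplus_{p+q=-1}V^{p,q}$. A weak polarization is a flat skew-symmetric bilinear form $S$ on $\mathbb V_{\mathbb R}$ with $S(V^{p,q},\overline{V^{r,s}})=0$ unless $(p,q)=(r,s)$, and $i^{p-q}S(v,\bar v)\ge0$ for all $v\in V^{p,q}$. $J(\mathbb V)\to X$ is the family of intermediate jacobians with fibers $J(V_x)=V_{x,\mathbb C}/(V_{x,\mathbb Z}+F^0V_{x,\mathbb C})$; as a family of real tori it is identified with $\mathbb V_{\mathbb R}/\mathbb V_{\mathbb Z}$, which gives it a flat structure. $\omega_S$ is the closed 2-form on $J(\mathbb V)$ that is parallel for the flat structure, vanishes on the zero section, and restricts on each fiber $V_{x,\mathbb R}/V_{x,\mathbb Z}$ to the translation-invariant 2-form $(u,v)\mapsto S(u,v)$. A normal function is a holomorphic section $\nu$ of $J(\mathbb V)$ whose associated extension $0\to\mathbb V\to\mathbb E\to\mathbb Z_X(0)\to0$ of local systems with fiberwise mixed Hodge structures is an admissible variation of mixed Hodge structure; in particular it satisfies Griffiths' infinitesimal period relation: for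 any local holomorphic lift $\tilde\nu$ of $\nu$ to a section of $\mathcal V$, $\nabla\tilde\nu$ is a section of $\mathcal F^{-1}\otimes\Omega^1_X$, where $\nabla$ is the flat connection. *)

theory Defs
  imports "HOL-Analysis.Analysis"
begin

text \<open>The base X is replaced by an open set U in complex^'n (a chart of
the complex manifold) over which the local system is trivialised: V_Z = Z^r,
V_R = R^r, V_C = C^r, with r = CARD('r).  The flat connection is then ordinary
differentiation.  Complex structure on tangent vectors: multiplication by i.\<close>

definition vconj :: "complex^'r \<Rightarrow> complex^'r" where
  "vconj v = (\<chi> i. cnj (v $ i))"

definition real_vecs :: "(complex^'r) set" where
  "real_vecs = {v. \<forall>i. Im (v $ i) = 0}"

definition lattice_vecs :: "(complex^'r) set" where
  "lattice_vecs = {v. \<forall>i. v $ i \<in> \<int>}"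

definition csubspace :: "(complex^'r) set \<Rightarrow> bool" where
  "csubspace A \<longleftrightarrow> 0 \<in> A \<and> (\<forall>u\<in>A. \<forall>w\<in>A. u + w \<in> A) \<and> (\<forall>c. \<forall>u\<in>A. c *s u \<in> A)"

text \<open>H p = V^{p,-1-p}: a Hodge structure of weight -1 on C^r (real structure: R^r).\<close>
definition hodge_structure_wm1 :: "(int \<Rightarrow> (complex^'r) set) \<Rightarrow> bool" where
  "hodge_structure_wm1 H \<longleftrightarrow>
     (\<forall>p. csubspace (H p)) \<and>
     (\<forall>p. vconj ` H p = H (-1 - p)) \<and>
     (\<exists>N::nat. (\<forall>p. int N < \<bar>p\<bar> \<longrightarrow> H p = {0}) \<and>
        (\<forall>v. \<exists>!c. (\<forall>p. c p \<in> H p) \<and> (\<forall>p. int N < \<bar>p\<bar> \<longrightarrow> c p = 0) \<and>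
                  v = (\<Sum>p\<in>{- int N..int N}. c p)))"

definition hodge_filt :: "(int \<Rightarrow> (complex^'r) set) \<Rightarrow> int \<Rightarrow> (complex^'r) set" where
  "hodge_filt H p = {v. \<exists>c. (\<forall>p'. c p' \<in> H p') \<and> finite {p'. c p' \<noteq> 0} \<and>
                          (\<forall>p'. p' < p \<longrightarrow> c p' = 0) \<and> v = (\<Sum>p'\<in>{p'. c p' \<noteq> 0}. c p')}"

definition Sc :: "real^'r^'r \<Rightarrow> complex^'r \<Rightarrow> complex^'r \<Rightarrow> complex" where
  "Sc Sm u w = (\<Sum>i\<in>UNIV. \<Sum>j\<in>UNIV. u $ i * complex_of_real (Sm $ i $ j) * w $ j)"

text \<open>Weak polarization (flat = constant in the trivialisation); q = -1-p, so p-q = 2p+1.\<close>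
definition weak_polarization :: "real^'r^'r \<Rightarrow> (int \<Rightarrow> (complex^'r) set) \<Rightarrow> bool" where
  "weak_polarization Sm H \<longleftrightarrow>
     (\<forall>i j. Sm $ i $ j = - Sm $ j $ i) \<and>
     (\<forall>p p'. p \<noteq> p' \<longrightarrow> (\<forall>a\<in>H p. \<forall>b\<in>H p'. Sc Sm a (vconj b) = 0)) \<and>
     (\<forall>p. \<forall>v\<in>H p. Im (\<i> powi (2*p+1) * Sc Sm v (vconj v)) = 0 \<and>
                    0 \<le> Re (\<i> powi (2*p+1) * Sc Sm v (vconj v)))"

definition holo_on :: "(complex^'n) set \<Rightarrow> (complex^'n \<Rightarrow> complex^'r) \<Rightarrow> bool" where
  "holo_on W f \<longleftrightarrow> (\<forall>x\<in>W. \<exists>D. (f has_derivative D) (at x) \<and> (\<forall>c v. D (c *s v) = c *s D v))"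

definition holo_subbundle :: "(complex^'n) set \<Rightarrow> (complex^'n \<Rightarrow> (complex^'r) set) \<Rightarrow> bool" where
  "holo_subbundle U F \<longleftrightarrow> (\<forall>x0\<in>U. \<exists>W k (e::nat \<Rightarrow> complex^'n \<Rightarrow> complex^'r). open W \<and> x0 \<in> W \<and> W \<subseteq> U \<and>
      (\<forall>i<k. holo_on W (e i)) \<and>
      (\<forall>y\<in>W. F y = {v. \<exists>c::nat \<Rightarrow> complex. v = (\<Sum>i<k. c i *s e i y)} \<and>
               (\<forall>c::nat \<Rightarrow> complex. (\<Sum>i<k. c i *s e i y) = 0 \<longrightarrow> (\<forall>i<k. c i = 0))))"

definition vhs_wm1 :: "(complex^'n) set \<Rightarrow> (int \<Rightarrow> complex^'n \<Rightarrow> (complex^'r) set) \<Rightarrow> bool" where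
  "vhs_wm1 U H \<longleftrightarrow> open U \<and>
     (\<forall>x\<in>U. hodge_structure_wm1 (\<lambda>p. H p x)) \<and>
     (\<forall>p. holo_subbundle U (\<lambda>x. hodge_filt (\<lambda>q. H q x) p)) \<and>
     (\<forall>p W s x D v. open W \<and> W \<subseteq> U \<and> holo_on W s \<and>
        (\<forall>y\<in>W. s y \<in> hodge_filt (\<lambda>q. H q y) p) \<and> x \<in> W \<and> (s has_derivative D) (at x)
        \<longrightarrow> D v \<in> hodge_filt (\<lambda>q. H q x) (p - 1))"

text \<open>Holomorphic lift nu of a normal function, satisfying Griffiths' infinitesimal
period relation  (nabla nu in F^{-1} (x) Omega^1).\<close>
definition normal_function_lift ::
  "(complex^'n) set \<Rightarrow> (int \<Rightarrow> complex^'n \<Rightarrow> (complex^'r) set) \<Rightarrow> (complex^'n \<Rightarrow> complex^'r) \<Rightarrow> bool" where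
  "normal_function_lift U H nu \<longleftrightarrow> holo_on U nu \<and>
     (\<forall>x\<in>U. \<forall>D. (nu has_derivative D) (at x) \<longrightarrow> (\<forall>v. D v \<in> hodge_filt (\<lambda>q. H q x) (-1)))"

text \<open>Flat real coordinate: identification J(V_x) = V_C/(V_Z+F^0) = V_R/V_Z; the point
z + F^0 corresponds to the unique real vector r with z - r in F^0.\<close>
definition flat_coord :: "(int \<Rightarrow> complex^'n \<Rightarrow> (complex^'r) set) \<Rightarrow> complex^'n \<Rightarrow> complex^'r \<Rightarrow> complex^'r" where
  "flat_coord H x z = (THE r. r \<in> real_vecs \<and> z - r \<in> hodge_filt (\<lambda>q. H q x) 0)"

text \<open>Pullback of omega_S at a point, given the differential D of the flat coordinate of nu.\<close>
definition pullback_omega :: "real^'r^'r \<Rightarrow> (complex^'n \<Rightarrow> complex^'r) \<Rightarrow> complex^'n \<Rightarrow> complex^'n \<Rightarrow> real" where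
  "pullback_omega Sm D u w = Re (Sc Sm (D u) (D w))"

end

theory Submission
  imports Defs
begin



lemma vconj_add: "vconj (a + b) = vconj a + vconj b" by (simp add: vconj_def vec_eq_iff)
lemma vconj_diff: "vconj (a - b) = vconj a - vconj b" by (simp add: vconj_def vec_eq_iff)
lemma vconj_minus: "vconj (- a) = - vconj a" by (simp add: vconj_def vec_eq_iff)
lemma vconj_zero[simp]: "vconj 0 = 0" by (simp add: vconj_def vec_eq_iff)
lemma vconj_smult: "vconj (c *s v) = cnj c *s vconj v" by (simp add: vconj_def vec_eq_iff)
lemma vconj_vconj[simp]: "vconj (vconj v) = v" by (simp add: vconj_def vec_eq_iff)
lemma vconj_nth[simp]: "vconj v $ i = cnj (v $ i)" by (simp add: vconj_def)
lemma vconj_sum: "vconj (sum f A) = sum (\<lambda>i. vconj (f i)) A"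
  by (induct A rule: infinite_finite_induct) (simp_all add: vconj_add)
lemma vconj_eq0[simp]: "vconj v = 0 \<longleftrightarrow> v = 0"
  by (metis vconj_vconj vconj_zero)
lemma real_vecs_iff: "v \<in> real_vecs \<longleftrightarrow> vconj v = v"
  by (auto simp: real_vecs_def vec_eq_iff complex_eq_iff)

lemma norm_smult_vec: "norm (c *s (v::complex^'r)) = norm c * norm v"
  by (simp add: norm_vec_def norm_mult L2_set_right_distrib)

lemma norm_vconj: "norm (vconj v) = norm v"
  by (simp add: norm_vec_def)

lemma bounded_linear_vconj: "bounded_linear vconj"
proof (rule bounded_linear_intro[where K=1])
  show "vconj (r *\<^sub>R x) = r *\<^sub>R vconj x" for r x
    by (simp add: vec_eq_iff)
qed (simp_all add: vconj_add norm_vconj)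

lemma bounded_bilinear_smult: "bounded_bilinear (\<lambda>(c::complex) (v::complex^'r). c *s v)"
proof (rule bounded_bilinear.intro)
  show "\<exists>K. \<forall>a b. norm (a *s (b::complex^'r)) \<le> norm a * norm b * K"
    by (rule exI[where x=1]) (simp add: norm_smult_vec)
qed (simp_all add: vec_eq_iff algebra_simps)

lemma scaleR_smult: "t *\<^sub>R (v::complex^'r) = complex_of_real t *s v"
  by (simp add: vec_eq_iff) (simp add: scaleR_conv_of_real)




definition hsN :: "(int \<Rightarrow> (complex^'r) set) \<Rightarrow> nat \<Rightarrow> bool" where
  "hsN H N \<longleftrightarrow> (\<forall>p. csubspace (H p)) \<and> (\<forall>p. vconj ` H p = H (-1 - p)) \<and>
     (\<forall>p. int N < \<bar>p\<bar> \<longrightarrow> H p = {0}) \<and>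
     (\<forall>v. \<exists>!c. (\<forall>p. c p \<in> H p) \<and> (\<forall>p. int N < \<bar>p\<bar> \<longrightarrow> c p = 0) \<and>
                  v = (\<Sum>p\<in>{- int N..int N}. c p))"

lemma hs_obtain: "hodge_structure_wm1 H \<Longrightarrow> \<exists>N. hsN H N"
  unfolding hodge_structure_wm1_def hsN_def by blast

definition dec :: "(int \<Rightarrow> (complex^'r) set) \<Rightarrow> nat \<Rightarrow> complex^'r \<Rightarrow> int \<Rightarrow> complex^'r" where
  "dec H N v = (THE c. (\<forall>p. c p \<in> H p) \<and> (\<forall>p. int N < \<bar>p\<bar> \<longrightarrow> c p = 0) \<and>
                  v = (\<Sum>p\<in>{- int N..int N}. c p))"

lemma dec_props:
  assumes "hsN H N"
  shows "\<forall>p. dec H N v p \<in> H p" "\<forall>p. int N < \<bar>p\<bar> \<longrightarrow> dec H N v p = 0"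
    "v = (\<Sum>p\<in>{- int N..int N}. dec H N v p)"
proof -
  have "\<exists>!c. (\<forall>p. c p \<in> H p) \<and> (\<forall>p. int N < \<bar>p\<bar> \<longrightarrow> c p = 0) \<and>
                  v = (\<Sum>p\<in>{- int N..int N}. c p)" using assms unfolding hsN_def by blast
  from theI'[OF this] show "\<forall>p. dec H N v p \<in> H p" "\<forall>p. int N < \<bar>p\<bar> \<longrightarrow> dec H N v p = 0"
    "v = (\<Sum>p\<in>{- int N..int N}. dec H N v p)" unfolding dec_def by blast+
qed

lemma dec_sum:
  assumes "hsN H N"
  shows "(\<Sum>p\<in>{- int N..int N}. dec H N v p) = v"
  using dec_props(3)[OF assms, of v] by (rule sym)

lemma hsN_csub: "hsN H N \<Longrightarrow> csubspace (H p)"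
  unfolding hsN_def by blast

lemma hsN_zero: "hsN H N \<Longrightarrow> 0 \<in> H p"
  unfolding hsN_def csubspace_def by blast

lemma hsN_vanish: "hsN H N \<Longrightarrow> c \<in> H p \<Longrightarrow> int N < \<bar>p\<bar> \<Longrightarrow> c = 0"
  unfolding hsN_def by blast

lemma dec_eq:
  assumes "hsN H N" "\<forall>p. c p \<in> H p" "v = (\<Sum>p\<in>{- int N..int N}. c p)"
  shows "dec H N v = c"
proof -
  have c0: "\<forall>p. int N < \<bar>p\<bar> \<longrightarrow> c p = 0"
  proof (intro allI impI)
    fix p assume "int N < \<bar>p\<bar>"
    then show "c p = 0" using hsN_vanish[OF assms(1) assms(2)[rule_format, of p]] by simp
  qed
  have ex: "\<exists>!c. (\<forall>p. c p \<in> H p) \<and> (\<forall>p. int N < \<bar>p\<bar> \<longrightarrow> c p = 0) \<and>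
                  v = (\<Sum>p\<in>{- int N..int N}. c p)" using assms(1) unfolding hsN_def by blast
  have P: "(\<forall>p. c p \<in> H p) \<and> (\<forall>p. int N < \<bar>p\<bar> \<longrightarrow> c p = 0) \<and>
                  v = (\<Sum>p\<in>{- int N..int N}. c p)" using assms(2,3) c0 by (intro conjI)
  show ?thesis unfolding dec_def
    by (rule the1_equality[where P="\<lambda>c. (\<forall>p. c p \<in> H p) \<and> (\<forall>p. int N < \<bar>p\<bar> \<longrightarrow> c p = 0) \<and>
                  v = (\<Sum>p\<in>{- int N..int N}. c p)", OF ex P])
qed

lemma sum_ext:
  assumes "hsN H N" "\<forall>p. c p \<in> H p" "finite A" "{- int N..int N} \<subseteq> A"
  shows "sum c A = (\<Sum>p\<in>{- int N..int N}. c p)"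
proof -
  have "\<forall>p\<in>A - {- int N..int N}. c p = 0"
  proof
    fix p assume "p \<in> A - {- int N..int N}"
    then have "int N < \<bar>p\<bar>" by auto
    then show "c p = 0" using hsN_vanish[OF assms(1)] assms(2) by blast
  qed
  then show ?thesis using assms(3,4) by (intro sum.mono_neutral_right) auto
qed

lemma hf_iff:
  assumes "hsN H N"
  shows "v \<in> hodge_filt H p \<longleftrightarrow> (\<forall>q<p. dec H N v q = 0)"
proof
  assume "v \<in> hodge_filt H p"
  then obtain d where d: "\<forall>p'. d p' \<in> H p'" "finite {p'. d p' \<noteq> 0}"
    "\<forall>p'. p' < p \<longrightarrow> d p' = 0" "v = (\<Sum>p'\<in>{p'. d p' \<noteq> 0}. d p')"
    unfolding hodge_filt_def by blast
  have sub: "{p'. d p' \<noteq> 0} \<subseteq> {- int N..int N}"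
  proof
    fix p' assume "p' \<in> {p'. d p' \<noteq> 0}"
    then have "\<not> int N < \<bar>p'\<bar>" using d(1) hsN_vanish[OF assms, of "d p'" p'] by auto
    then show "p' \<in> {- int N..int N}" by auto
  qed
  have "v = (\<Sum>p'\<in>{- int N..int N}. d p')"
    using d(4) sub by (simp add: sum.mono_neutral_left)
  then have "dec H N v = d" using dec_eq[OF assms d(1)] by simp
  then show "\<forall>q<p. dec H N v q = 0" using d(3) by simp
next
  assume a: "\<forall>q<p. dec H N v q = 0"
  let ?d = "dec H N v"
  have sub: "{p'. ?d p' \<noteq> 0} \<subseteq> {- int N..int N}"
  proof
    fix p' assume "p' \<in> {p'. ?d p' \<noteq> 0}"
    then have "\<not> int N < \<bar>p'\<bar>" using dec_props(2)[OF assms] by auto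
    then show "p' \<in> {- int N..int N}" by auto
  qed
  have fin: "finite {p'. ?d p' \<noteq> 0}" using sub finite_subset by blast
  have "(\<Sum>p'\<in>{p'. ?d p' \<noteq> 0}. ?d p') = (\<Sum>p'\<in>{- int N..int N}. ?d p')"
    using sub by (intro sum.mono_neutral_left) auto
  then have "v = (\<Sum>p'\<in>{p'. ?d p' \<noteq> 0}. ?d p')"
    by (simp add: dec_sum[OF assms])
  then show "v \<in> hodge_filt H p" unfolding hodge_filt_def
    using dec_props(1)[OF assms] fin a by blast
qed

lemma dec_vconj:
  assumes "hsN H N"
  shows "dec H N (vconj v) q = vconj (dec H N v (-1-q))"
proof -
  let ?c = "\<lambda>q. vconj (dec H N v (-1-q))"
  have cH: "\<forall>q. ?c q \<in> H q"
  proof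
    fix q
    have "vconj ` H (-1-q) = H (-1 - (-1-q))" using assms unfolding hsN_def by blast
    then show "?c q \<in> H q" using dec_props(1)[OF assms, of v] by auto
  qed
  have "(\<Sum>q\<in>{- int N..int N}. ?c q) = (\<Sum>q\<in>{- int N - 1..int N}. ?c q)"
    using sum_ext[OF assms cH, of "{- int N - 1..int N}"] by simp
  also have "\<dots> = (\<Sum>p\<in>{- int N - 1..int N}. vconj (dec H N v p))"
    by (rule sum.reindex_bij_witness[where i="\<lambda>p. -1-p" and j="\<lambda>q. -1-q"]) auto
  also have "\<dots> = (\<Sum>p\<in>{- int N..int N}. vconj (dec H N v p))"
    using dec_props(2)[OF assms, of v] by (intro sum.mono_neutral_right) auto
  also have "\<dots> = vconj v"
    by (simp add: vconj_sum[symmetric] dec_sum[OF assms])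
  finally show ?thesis using dec_eq[OF assms cH] by metis
qed

lemma csub_zero: "csubspace A \<Longrightarrow> 0 \<in> A" unfolding csubspace_def by simp
lemma csub_add: "csubspace A \<Longrightarrow> u \<in> A \<Longrightarrow> w \<in> A \<Longrightarrow> u + w \<in> A"
  unfolding csubspace_def by simp
lemma csub_smult: "csubspace A \<Longrightarrow> u \<in> A \<Longrightarrow> c *s u \<in> A"
  unfolding csubspace_def by simp
lemma csub_sum: "csubspace A \<Longrightarrow> (\<forall>i\<in>S. f i \<in> A) \<Longrightarrow> sum f S \<in> A"
proof (induct S rule: infinite_finite_induct)
  case (insert x F)
  have a: "f x \<in> A" using insert.prems(2) by blast
  have b: "sum f F \<in> A" using insert.hyps(3) insert.prems by blast
  show ?case unfolding sum.insert[OF insert.hyps(1,2)] by (rule csub_add[OF insert.prems(1) a b])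
qed (simp_all add: csub_zero)

lemma dec_add:
  assumes "hsN H N" shows "dec H N (u + w) = (\<lambda>p. dec H N u p + dec H N w p)"
proof (rule dec_eq[OF assms])
  show "\<forall>p. dec H N u p + dec H N w p \<in> H p"
    using csub_add[OF hsN_csub[OF assms] dec_props(1)[OF assms, rule_format] dec_props(1)[OF assms, rule_format]] by blast
  show "u + w = (\<Sum>p\<in>{- int N..int N}. dec H N u p + dec H N w p)"
    by (simp add: sum.distrib dec_sum[OF assms])
qed

lemma dec_smult:
  assumes "hsN H N" shows "dec H N (c *s u) = (\<lambda>p. c *s dec H N u p)"
proof (rule dec_eq[OF assms])
  show "\<forall>p. c *s dec H N u p \<in> H p"
    using csub_smult[OF hsN_csub[OF assms] dec_props(1)[OF assms, rule_format]] by blast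
  show "c *s u = (\<Sum>p\<in>{- int N..int N}. c *s dec H N u p)"
    by (simp add: sum_cmul dec_sum[OF assms])
qed




lemma hf_add: "hsN H N \<Longrightarrow> u \<in> hodge_filt H p \<Longrightarrow> w \<in> hodge_filt H p \<Longrightarrow> u + w \<in> hodge_filt H p"
  by (simp add: hf_iff dec_add)

lemma hf_smult: "hsN H N \<Longrightarrow> u \<in> hodge_filt H p \<Longrightarrow> c *s u \<in> hodge_filt H p"
  by (simp add: hf_iff dec_smult)

lemma hf_zero: "hsN H N \<Longrightarrow> 0 \<in> hodge_filt H p"
proof -
  assume hs: "hsN H N"
  have "dec H N 0 = (\<lambda>p. 0)" by (rule dec_eq[OF hs]) (simp_all add: hsN_zero[OF hs])
  then show ?thesis by (simp add: hf_iff[OF hs])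
qed

lemma hf_csub: "hsN H N \<Longrightarrow> csubspace (hodge_filt H p)"
  unfolding csubspace_def using hf_add hf_smult hf_zero by blast

lemma hf_neg: "hsN H N \<Longrightarrow> u \<in> hodge_filt H p \<Longrightarrow> - u \<in> hodge_filt H p"
  using hf_smult[of H N u p "-1"] by (simp add: vector_sneg_minus1[symmetric])

lemma hf_diff: "hsN H N \<Longrightarrow> u \<in> hodge_filt H p \<Longrightarrow> w \<in> hodge_filt H p \<Longrightarrow> u - w \<in> hodge_filt H p"
  using hf_add[of H N u p "- w"] hf_neg[of H N w p] by simp

lemma hf_mono: "hsN H N \<Longrightarrow> p' \<le> p \<Longrightarrow> u \<in> hodge_filt H p \<Longrightarrow> u \<in> hodge_filt H p'"
  by (simp add: hf_iff)

lemma hf_sum: "hsN H N \<Longrightarrow> (\<forall>i\<in>S. f i \<in> hodge_filt H p) \<Longrightarrow> sum f S \<in> hodge_filt H p"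
  by (rule csub_sum[OF hf_csub])

lemma hs_decomp:
  assumes hs: "hsN H N"
  shows "\<exists>f h. v = f + h \<and> f \<in> hodge_filt H 0 \<and> vconj h \<in> hodge_filt H 0"
proof -
  let ?cf = "\<lambda>p. if 0 \<le> p then dec H N v p else 0"
  let ?ch = "\<lambda>p. if p < 0 then dec H N v p else 0"
  define f where "f = (\<Sum>p\<in>{- int N..int N}. ?cf p)"
  define h where "h = (\<Sum>p\<in>{- int N..int N}. ?ch p)"
  have cfH: "\<forall>p. ?cf p \<in> H p" using dec_props(1)[OF hs] hsN_zero[OF hs] by simp
  have chH: "\<forall>p. ?ch p \<in> H p" using dec_props(1)[OF hs] hsN_zero[OF hs] by simp
  have "f + h = (\<Sum>p\<in>{- int N..int N}. ?cf p + ?ch p)"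
    unfolding f_def h_def by (simp add: sum.distrib)
  also have "\<dots> = (\<Sum>p\<in>{- int N..int N}. dec H N v p)"
    by (rule sum.cong) auto
  also have "\<dots> = v" by (rule dec_sum[OF hs])
  finally have v: "v = f + h" by simp
  have df: "dec H N f = ?cf" using dec_eq[OF hs cfH] f_def by simp
  have dh: "dec H N h = ?ch" using dec_eq[OF hs chH] h_def by simp
  have "f \<in> hodge_filt H 0" by (simp add: hf_iff[OF hs] df)
  moreover have "vconj h \<in> hodge_filt H 0"
    by (simp add: hf_iff[OF hs] dec_vconj[OF hs] dh)
  ultimately show ?thesis using v by blast
qed

lemma dec_zero_cases:
  assumes hs: "hsN H N" and "f \<in> hodge_filt H p" and "vconj f \<in> hodge_filt H 0"
  shows "\<And>q. q < p \<Longrightarrow> dec H N f q = 0" "\<And>q. 0 \<le> q \<Longrightarrow> dec H N f q = 0"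
proof -
  show "\<And>q. q < p \<Longrightarrow> dec H N f q = 0" using assms(2) hf_iff[OF hs] by blast
  fix q :: int assume q: "0 \<le> q"
  have "dec H N (vconj f) (-1-q) = 0" using assms(3) hf_iff[OF hs] q by simp
  then have "vconj (dec H N f (-1 - (-1-q))) = 0" by (simp add: dec_vconj[OF hs])
  then show "dec H N f q = 0" by simp
qed

lemma hs_F0_conj:
  assumes hs: "hsN H N" and "f \<in> hodge_filt H 0" and "vconj f \<in> hodge_filt H 0"
  shows "f = 0"
proof -
  have "\<forall>q. dec H N f q = 0"
  proof
    fix q :: int show "dec H N f q = 0"
      using dec_zero_cases[OF assms] by (cases "q < 0") auto
  qed
  then have "(\<Sum>p\<in>{- int N..int N}. dec H N f p) = 0" by simp
  then show ?thesis using dec_sum[OF hs, of f] by simp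
qed

lemma hs_Fm1_conj:
  assumes hs: "hsN H N" and "a \<in> hodge_filt H (-1)" and "vconj a \<in> hodge_filt H 0"
  shows "a \<in> H (-1)"
proof -
  have z: "\<forall>q. q \<noteq> -1 \<longrightarrow> dec H N a q = 0"
  proof (intro allI impI)
    fix q :: int assume "q \<noteq> -1"
    then show "dec H N a q = 0"
      using dec_zero_cases[OF assms] by (cases "q < -1") auto
  qed
  have "a = (\<Sum>p\<in>{- int N..int N}. dec H N a p)" using dec_sum[OF hs, of a] by simp
  also have "\<dots> = (\<Sum>p\<in>{- int N..int N}. if p = -1 then dec H N a (-1) else 0)"
    using z by (intro sum.cong) auto
  also have "\<dots> = (if -1 \<in> {- int N..int N} then dec H N a (-1) else 0)"
    by (simp add: sum.delta)
  finally have eq: "a = (if -1 \<in> {- int N..int N} then dec H N a (-1) else 0)" .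
  have m: "dec H N a (-1) \<in> H (-1)" using dec_props(1)[OF hs, of a] by blast
  show ?thesis using eq m hsN_zero[OF hs, of "-1"] by metis
qed




lemma lin_expand:
  fixes f :: "'b::euclidean_space \<Rightarrow> 'c::real_vector"
  assumes "linear f" shows "f c = (\<Sum>j\<in>Basis. (c \<bullet> j) *\<^sub>R f j)"
proof -
  have "f c = f (\<Sum>j\<in>Basis. (c \<bullet> j) *\<^sub>R j)" by (simp add: euclidean_representation)
  also have "\<dots> = (\<Sum>j\<in>Basis. (c \<bullet> j) *\<^sub>R f j)"
    by (simp add: linear_sum[OF assms] linear_scale[OF assms])
  finally show ?thesis .
qed

lemma inv_family_deriv:
  fixes L :: "'a::euclidean_space \<Rightarrow> 'b::euclidean_space \<Rightarrow> 'b" and w :: "'a \<Rightarrow> 'b"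
  assumes W: "open W" "x \<in> W"
    and lin: "\<And>y. y \<in> W \<Longrightarrow> linear (L y)"
    and inj: "\<And>y. y \<in> W \<Longrightarrow> inj (L y)"
    and dL: "\<And>j. j \<in> Basis \<Longrightarrow> ((\<lambda>y. L y j) has_derivative DL j) (at x)"
    and dw: "(w has_derivative Dw) (at x)"
  shows "\<exists>G. ((\<lambda>y. inv (L y) (w y)) has_derivative G) (at x)"
proof -
  define Li where "Li y = inv (L y)" for y
  have surj: "surj (L y)" if "y \<in> W" for y
    using lin[OF that] inj[OF that] by (simp add: linear_injective_imp_surjective)
  have LLi: "L y (Li y z) = z" if "y \<in> W" for y z
    unfolding Li_def using surj[OF that] by (simp add: surj_f_inv_f)
  have LiL: "Li y (L y c) = c" if "y \<in> W" for y c
    unfolding Li_def using inj[OF that] by (simp add: inv_f_f)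
  have linLi: "linear (Li x)" unfolding Li_def
    using lin[OF W(2)] inj[OF W(2)] by (rule inj_linear_imp_inv_linear)
  obtain m where m: "m > 0" "\<And>v. m * norm v \<le> norm (L x v)"
    using linear_inj_bounded_below_pos[OF lin[OF W(2)] inj[OF W(2)]] by blast
  define eps where "eps y = (\<Sum>j\<in>Basis. norm (L y j - L x j))" for y
  have eps_bound: "norm (L y v - L x v) \<le> norm v * eps y" if "y \<in> W" for y v
  proof -
    have "L y v - L x v = (\<Sum>j\<in>Basis. (v \<bullet> j) *\<^sub>R (L y j - L x j))"
      using lin_expand[OF lin[OF that], of v] lin_expand[OF lin[OF W(2)], of v]
      by (simp add: sum_subtractf scaleR_diff_right)
    also have "norm \<dots> \<le> (\<Sum>j\<in>Basis. norm ((v \<bullet> j) *\<^sub>R (L y j - L x j)))"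
      by (rule norm_sum)
    also have "\<dots> \<le> (\<Sum>j\<in>Basis. norm v * norm (L y j - L x j))"
      by (intro sum_mono) (simp add: Basis_le_norm mult_right_mono)
    also have "\<dots> = norm v * eps y" by (simp add: eps_def sum_distrib_left)
    finally show ?thesis .
  qed
  have eps0: "eps x = 0" by (simp add: eps_def)
  have eps_nonneg: "eps y \<ge> 0" for y by (simp add: eps_def sum_nonneg)
  have cont_eps: "isCont eps x"
    unfolding eps_def
    by (intro continuous_intros has_derivative_continuous[OF dL]) 
  define z0 where "z0 = w x"
  define v0 where "v0 = Li x z0"
  define Gt where "Gt q = (fst q, Li (fst q) (snd q))" for q :: "'a \<times> 'b"
  have fst_lim: "(fst \<longlongrightarrow> x) (at (x, z0))"
    using tendsto_fst[OF tendsto_ident_at[of "(x, z0)" UNIV]] by simp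
  have snd_lim: "(snd \<longlongrightarrow> z0) (at (x, z0))"
    using tendsto_snd[OF tendsto_ident_at[of "(x, z0)" UNIV]] by simp
  have epslim: "((\<lambda>q. eps (fst q)) \<longlongrightarrow> 0) (at (x, z0))"
    using isCont_tendsto_compose[OF cont_eps fst_lim] eps0 by simp
  have ev1: "eventually (\<lambda>q. fst q \<in> W) (at (x, z0))"
    using topological_tendstoD[OF fst_lim W(1) W(2)] .
  have ev2: "eventually (\<lambda>q. eps (fst q) < m / 2) (at (x, z0))"
    using order_tendstoD(2)[OF epslim, of "m / 2"] m(1) by simp
  have bound: "norm (Li y z - v0) \<le> (2 / m) * (norm v0 * eps y + norm (z - z0))"
    if y: "y \<in> W" and e: "eps y < m / 2" for y z
  proof -
    define v where "v = Li y z"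
    define d where "d = norm (v - v0)"
    have Lv: "L y v = z" unfolding v_def using LLi[OF y] .
    have Lv0: "L x v0 = z0" unfolding v0_def using LLi[OF W(2)] .
    have "m * d \<le> norm (L x (v - v0))" unfolding d_def by (rule m(2))
    also have "L x (v - v0) = (L x v - L y v) + (z - z0)"
      using Lv Lv0 linear_diff[OF lin[OF W(2)]] by simp
    also have "norm \<dots> \<le> norm (L x v - L y v) + norm (z - z0)" by (rule norm_triangle_ineq)
    also have "norm (L x v - L y v) \<le> norm v * eps y"
      using eps_bound[OF y, of v] by (simp add: norm_minus_commute)
    also have "norm v \<le> norm v0 + d" unfolding d_def
      using norm_triangle_ineq[of v0 "v - v0"] by simp
    finally have A: "m * d \<le> (norm v0 + d) * eps y + norm (z - z0)"
      using eps_nonneg[of y] by (smt (verit) mult_right_mono)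
    have "d \<ge> 0" unfolding d_def by simp
    then have "d * eps y \<le> d * (m / 2)"
      using e by (intro mult_left_mono) auto
    then have "(m / 2) * d \<le> norm v0 * eps y + norm (z - z0)"
      using A by (simp add: algebra_simps)
    then have "d \<le> (2 / m) * (norm v0 * eps y + norm (z - z0))"
      using m(1) by (simp add: field_simps)
    then show ?thesis unfolding d_def v_def .
  qed
  have contG: "continuous (at (x, z0)) Gt"
  proof -
    have "((\<lambda>q. Li (fst q) (snd q) - v0) \<longlongrightarrow> 0) (at (x, z0))"
    proof (rule Lim_null_comparison)
      show "eventually (\<lambda>q. norm (Li (fst q) (snd q) - v0) \<le> (2 / m) * (norm v0 * eps (fst q) + norm (snd q - z0))) (at (x, z0))"
        using ev1 ev2 by eventually_elim (rule bound)
      have "((\<lambda>q. norm (snd q - z0)) \<longlongrightarrow> 0) (at (x, z0))"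
        using tendsto_norm[OF tendsto_diff[OF snd_lim tendsto_const[of z0]]] by simp
      then have "((\<lambda>q. (2 / m) * (norm v0 * eps (fst q) + norm (snd q - z0))) \<longlongrightarrow> (2 / m) * (norm v0 * 0 + 0)) (at (x, z0))"
        by (intro tendsto_mult tendsto_add tendsto_const epslim)
      then show "((\<lambda>q. (2 / m) * (norm v0 * eps (fst q) + norm (snd q - z0))) \<longlongrightarrow> 0) (at (x, z0))"
        by simp
    qed
    then have "((\<lambda>q. Li (fst q) (snd q)) \<longlongrightarrow> v0) (at (x, z0))"
      using Lim_null by blast
    moreover have "v0 = Li (fst (x, z0)) (snd (x, z0))" by (simp add: v0_def)
    ultimately show ?thesis unfolding Gt_def continuous_def
      using fst_lim by (intro tendsto_Pair) (auto simp: Lim_ident_at)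
  qed
  have linDL: "linear (DL j)" if "j \<in> Basis" for j
    using dL[OF that] by (simp add: has_derivative_bounded_linear bounded_linear.linear)
  define Phi where "Phi q = (fst q, \<Sum>j\<in>Basis. (snd q \<bullet> j) *\<^sub>R L (fst q) j)" for q :: "'a \<times> 'b"
  define Phi' where "Phi' h = (fst h, \<Sum>j\<in>Basis. (v0 \<bullet> j) *\<^sub>R DL j (fst h) + (snd h \<bullet> j) *\<^sub>R L x j)"
    for h :: "'a \<times> 'b"
  define g' where "g' q = (fst q, Li x (snd q - (\<Sum>j\<in>Basis. (v0 \<bullet> j) *\<^sub>R DL j (fst q))))"
    for q :: "'a \<times> 'b"
  have dLc: "((\<lambda>q. L (fst q) j) has_derivative (\<lambda>h. DL j (fst h))) (at (x, v0))" if "j \<in> Basis" for j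
  proof -
    have fd: "(fst has_derivative fst) (at (x, v0))"
      by (rule bounded_linear_imp_has_derivative[OF bounded_linear_fst])
    have "((\<lambda>y. L y j) has_derivative DL j) (at (fst (x, v0)))" using dL[OF that] by simp
    from has_derivative_compose[OF fd this] show ?thesis by simp
  qed
  have dPhi: "(Phi has_derivative Phi') (at (x, v0))"
    unfolding Phi_def Phi'_def
  proof (rule has_derivative_Pair)
    show "(fst has_derivative fst) (at (x, v0))"
      by (rule bounded_linear_imp_has_derivative[OF bounded_linear_fst])
    show "((\<lambda>q. \<Sum>j\<in>Basis. (snd q \<bullet> j) *\<^sub>R L (fst q) j) has_derivative
      (\<lambda>h. \<Sum>j\<in>Basis. (v0 \<bullet> j) *\<^sub>R DL j (fst h) + (snd h \<bullet> j) *\<^sub>R L x j)) (at (x, v0))"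
    proof (rule has_derivative_sum)
      fix j :: 'b assume j: "j \<in> Basis"
      have "((\<lambda>q. snd q \<bullet> j) has_derivative (\<lambda>h. snd h \<bullet> j)) (at (x, v0))"
        by (rule bounded_linear_imp_has_derivative[OF bounded_linear_compose[OF bounded_linear_inner_left bounded_linear_snd]])
      from has_derivative_scaleR[OF this dLc[OF j]]
      show "((\<lambda>q. (snd q \<bullet> j) *\<^sub>R L (fst q) j) has_derivative
         (\<lambda>h. (v0 \<bullet> j) *\<^sub>R DL j (fst h) + (snd h \<bullet> j) *\<^sub>R L x j)) (at (x, v0))"
        by simp
    qed
  qed
  have ling': "linear g'"
  proof (rule linearI)
    fix a b :: "'a \<times> 'b"
    have "(\<Sum>j\<in>Basis. (v0 \<bullet> j) *\<^sub>R DL j (fst (a + b))) =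
          (\<Sum>j\<in>Basis. (v0 \<bullet> j) *\<^sub>R DL j (fst a)) + (\<Sum>j\<in>Basis. (v0 \<bullet> j) *\<^sub>R DL j (fst b))"
      by (simp add: sum.distrib[symmetric] linear_add[OF linDL] scaleR_add_right)
    then show "g' (a + b) = g' a + g' b"
      unfolding g'_def by (simp add: linear_add[OF linLi, symmetric] algebra_simps)
  next
    fix r :: real and b :: "'a \<times> 'b"
    have "(\<Sum>j\<in>Basis. (v0 \<bullet> j) *\<^sub>R DL j (fst (r *\<^sub>R b))) =
          r *\<^sub>R (\<Sum>j\<in>Basis. (v0 \<bullet> j) *\<^sub>R DL j (fst b))"
      by (simp add: scaleR_sum_right linear_scale[OF linDL] mult.commute)
    then show "g' (r *\<^sub>R b) = r *\<^sub>R g' b"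
      unfolding g'_def by (simp add: linear_scale[OF linLi, symmetric] scaleR_diff_right)
  qed
  have blg': "bounded_linear g'" using ling' by (simp add: linear_conv_bounded_linear)
  have gPhi: "g' \<circ> Phi' = id"
  proof
    fix h :: "'a \<times> 'b"
    have "(\<Sum>j\<in>Basis. (v0 \<bullet> j) *\<^sub>R DL j (fst h) + (snd h \<bullet> j) *\<^sub>R L x j)
          - (\<Sum>j\<in>Basis. (v0 \<bullet> j) *\<^sub>R DL j (fst h)) = (\<Sum>j\<in>Basis. (snd h \<bullet> j) *\<^sub>R L x j)"
      by (simp add: sum.distrib)
    also have "\<dots> = L x (snd h)" using lin_expand[OF lin[OF W(2)], of "snd h"] by simp
    finally show "(g' \<circ> Phi') h = id h"
      unfolding g'_def Phi'_def by (simp add: LiL[OF W(2)])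
  qed
  have PhiG: "Phi (Gt q) = q" if "q \<in> W \<times> UNIV" for q
  proof -
    have y: "fst q \<in> W" using that by auto
    have "(\<Sum>j\<in>Basis. (Li (fst q) (snd q) \<bullet> j) *\<^sub>R L (fst q) j) = L (fst q) (Li (fst q) (snd q))"
      using lin_expand[OF lin[OF y], of "Li (fst q) (snd q)"] by (rule sym)
    also have "\<dots> = snd q" by (rule LLi[OF y])
    finally show ?thesis unfolding Phi_def Gt_def by simp
  qed
  have GtX: "Gt (x, z0) = (x, v0)" by (simp add: Gt_def v0_def)
  have dG: "(Gt has_derivative g') (at (x, z0))"
  proof (rule has_derivative_inverse_basic[OF _ blg' gPhi contG])
    show "(Phi has_derivative Phi') (at (Gt (x, z0)))" using dPhi GtX by simp
    show "open (W \<times> (UNIV :: 'b set))" using W(1) by (simp add: open_Times)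
    show "(x, z0) \<in> W \<times> (UNIV :: 'b set)" using W(2) by simp
  qed (rule PhiG)
  have dpair: "((\<lambda>y. (y, w y)) has_derivative (\<lambda>h. (h, Dw h))) (at x)"
    by (rule has_derivative_Pair[OF has_derivative_ident dw])
  have "((\<lambda>y. Gt (y, w y)) has_derivative (\<lambda>h. g' (h, Dw h))) (at x)"
    using has_derivative_compose[OF dpair, of Gt g'] dG by (simp add: z0_def)
  from has_derivative_snd[OF this]
  have "((\<lambda>y. Li y (w y)) has_derivative (\<lambda>h. snd (g' (h, Dw h)))) (at x)"
    by (simp add: Gt_def)
  then show ?thesis unfolding Li_def by blast
qed




definition rep :: "(nat \<Rightarrow> 'n \<Rightarrow> complex^'r) \<Rightarrow> nat \<Rightarrow> 'n \<Rightarrow> (nat \<Rightarrow> complex) \<Rightarrow> (nat \<Rightarrow> complex) \<Rightarrow> complex^'r"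
  where "rep e k y a b = (\<Sum>i<k. a i *s e i y) + (\<Sum>i<k. b i *s vconj (e i y))"

lemma rep_add: "rep e k y (\<lambda>i. a i + a' i) (\<lambda>i. b i + b' i) = rep e k y a b + rep e k y a' b'"
  by (simp add: rep_def vector_sadd_rdistrib sum.distrib algebra_simps)

lemma rep_diff: "rep e k y (\<lambda>i. a i - a' i) (\<lambda>i. b i - b' i) = rep e k y a b - rep e k y a' b'"
  by (simp add: rep_def vector_sub_rdistrib sum_subtractf algebra_simps)

lemma rep_smult: "rep e k y (\<lambda>i. c * a i) (\<lambda>i. c * b i) = c *s rep e k y a b"
  by (simp add: rep_def vector_add_ldistrib sum_cmul[symmetric] vector_smult_assoc)

lemma rep_cong: "(\<And>i. i < k \<Longrightarrow> a i = a' i \<and> b i = b' i) \<Longrightarrow> rep e k y a b = rep e k y a' b'"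
  unfolding rep_def by (intro arg_cong2[where f="(+)"] sum.cong) auto

lemma rep_zero: "rep e k y (\<lambda>i. 0) (\<lambda>i. 0) = 0"
  by (simp add: rep_def)

lemma deriv_real:
  fixes f :: "'a::real_normed_vector \<Rightarrow> complex^'r"
  assumes "open W" "x \<in> W" "\<And>y. y \<in> W \<Longrightarrow> f y \<in> real_vecs" "(f has_derivative D) (at x)"
  shows "D u \<in> real_vecs"
proof -
  have "Im (D u $ i) = 0" for i
  proof -
    have bl: "bounded_linear (\<lambda>v::complex^'r. Im (v $ i))"
      by (rule bounded_linear_compose[OF bounded_linear_Im bounded_linear_vec_nth])
    have d1: "((\<lambda>y. Im (f y $ i)) has_derivative (\<lambda>h. Im (D h $ i))) (at x)"
      by (rule bounded_linear.has_derivative[OF bl assms(4)])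
    have "((\<lambda>y. 0::real) has_derivative (\<lambda>h. 0)) (at x)" by (rule has_derivative_const)
    then have d2: "((\<lambda>y. Im (f y $ i)) has_derivative (\<lambda>h. 0)) (at x)"
    proof (rule has_derivative_transform_within_open[OF _ assms(1,2)])
      fix y assume "y \<in> W" then show "0 = Im (f y $ i)" using assms(3) by (simp add: real_vecs_def)
    qed
    from has_derivative_unique[OF d1 d2] show ?thesis by metis
  qed
  then show ?thesis by (simp add: real_vecs_def)
qed

lemma flat_coord_eq:
  assumes hs: "hsN (\<lambda>q. H q y) N" and r: "r \<in> real_vecs" and zr: "z - r \<in> hodge_filt (\<lambda>q. H q y) 0"
  shows "flat_coord H y z = r"
proof -
  have uniq: "r' = r" if "r' \<in> real_vecs" "z - r' \<in> hodge_filt (\<lambda>q. H q y) 0" for r'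
  proof -
    have d: "r - r' \<in> hodge_filt (\<lambda>q. H q y) 0"
      using hf_diff[OF hs that(2) zr] by simp
    have "vconj (r - r') = r - r'" using r that(1) by (simp add: real_vecs_iff vconj_diff)
    then have "r - r' = 0" using hs_F0_conj[OF hs d] d by simp
    then show ?thesis by simp
  qed
  have P: "r \<in> real_vecs \<and> z - r \<in> hodge_filt (\<lambda>q. H q y) 0" using r zr by (intro conjI)
  have ex: "\<exists>!r. r \<in> real_vecs \<and> z - r \<in> hodge_filt (\<lambda>q. H q y) 0"
  proof (rule ex1I[of _ r])
    show "r \<in> real_vecs \<and> z - r \<in> hodge_filt (\<lambda>q. H q y) 0" by (rule P)
  next
    fix r' assume "r' \<in> real_vecs \<and> z - r' \<in> hodge_filt (\<lambda>q. H q y) 0"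
    then show "r' = r" using uniq[of r'] by (elim conjE)
  qed
  show ?thesis unfolding flat_coord_def
    by (rule the1_equality[where P="\<lambda>r. r \<in> real_vecs \<and> z - r \<in> hodge_filt (\<lambda>q. H q y) 0", OF ex P])
qed

lemma Sc_add1: "Sc S (a + b) c = Sc S a c + Sc S b c"
  by (simp add: Sc_def algebra_simps sum.distrib)
lemma Sc_add2: "Sc S c (a + b) = Sc S c a + Sc S c b"
  by (simp add: Sc_def algebra_simps sum.distrib)
lemma Sc_diff1: "Sc S (a - b) c = Sc S a c - Sc S b c"
  by (simp add: Sc_def algebra_simps sum_subtractf)
lemma Sc_diff2: "Sc S c (a - b) = Sc S c a - Sc S c b"
  by (simp add: Sc_def algebra_simps sum_subtractf)
lemma Sc_smult1: "Sc S (t *s a) c = t * Sc S a c"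
  by (simp add: Sc_def algebra_simps sum_distrib_left)
lemma Sc_smult2: "Sc S c (t *s a) = t * Sc S c a"
  by (simp add: Sc_def algebra_simps sum_distrib_left)
lemma Sc_skew:
  assumes "\<forall>i j. S $ i $ j = - S $ j $ i"
  shows "Sc S b a = - Sc S a b"
proof -
  have "Sc S b a = (\<Sum>i\<in>UNIV. \<Sum>j\<in>UNIV. b $ i * complex_of_real (S $ i $ j) * a $ j)"
    by (simp add: Sc_def)
  also have "\<dots> = (\<Sum>j\<in>UNIV. \<Sum>i\<in>UNIV. b $ i * complex_of_real (S $ i $ j) * a $ j)"
    by (rule sum.swap)
  also have "\<dots> = (\<Sum>j\<in>UNIV. \<Sum>i\<in>UNIV. - (a $ j * complex_of_real (S $ j $ i) * b $ i))"
  proof (intro sum.cong refl)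
    fix j i
    have "S $ i $ j = - S $ j $ i" using assms by blast
    then show "b $ i * complex_of_real (S $ i $ j) * a $ j = - (a $ j * complex_of_real (S $ j $ i) * b $ i)"
      by (simp add: algebra_simps)
  qed
  also have "\<dots> = - Sc S a b" by (simp add: Sc_def sum_negf)
  finally show ?thesis .
qed

lemma Sc_self0: "\<forall>i j. S $ i $ j = - S $ j $ i \<Longrightarrow> Sc S a a = 0"
proof -
  assume sk: "\<forall>i j. S $ i $ j = - S $ j $ i"
  have "Sc S a a = - Sc S a a" by (rule Sc_skew[OF sk])
  then show ?thesis by simp
qed




lemma halves:
  assumes "p \<in> real_vecs" "q \<in> real_vecs" "a = p - \<i> *s q"
  shows "p = (1/2) *s (a + vconj a)" "q = (\<i>/2) *s (a - vconj a)"
  using assms by (auto simp: vec_eq_iff real_vecs_def complex_eq_iff)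

lemma final_alg:
  assumes wp: "weak_polarization Sm H0" and hs: "hsN H0 N"
    and a: "a \<in> H0 (-1)" and b: "b \<in> H0 (-1)"
  shows "Re (Sc Sm ((\<i>/2) *s (a - vconj a)) ((\<i>/2) *s (b - vconj b)))
         = Re (Sc Sm ((1/2) *s (a + vconj a)) ((1/2) *s (b + vconj b)))"
    and "0 \<le> Re (Sc Sm ((1/2) *s (a + vconj a)) ((\<i>/2) *s (a - vconj a)))"
proof -
  note W = wp[unfolded weak_polarization_def]
  have sk: "\<forall>i j. Sm $ i $ j = - Sm $ j $ i" using W by (rule conjunct1)
  have orth0: "\<forall>p p'. p \<noteq> p' \<longrightarrow> (\<forall>a\<in>H0 p. \<forall>b\<in>H0 p'. Sc Sm a (vconj b) = 0)"
    using W by (elim conjE)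
  have posall: "\<forall>p. \<forall>v\<in>H0 p. Im (\<i> powi (2*p+1) * Sc Sm v (vconj v)) = 0 \<and>
                    0 \<le> Re (\<i> powi (2*p+1) * Sc Sm v (vconj v))"
    using W by (elim conjE)
  have orth: "Sc Sm u (vconj v) = 0" if "p \<noteq> p'" "u \<in> H0 p" "v \<in> H0 p'" for p p' u v
    using orth0 that by blast
  have conjH: "vconj ` H0 (-1) = H0 (-1 - (-1))" using hs unfolding hsN_def by (elim conjE) (rule spec)
  have ca: "vconj a \<in> H0 0" using imageI[OF a, of vconj] conjH by simp
  have cb: "vconj b \<in> H0 0" using imageI[OF b, of vconj] conjH by simp
  have ab: "Sc Sm a b = 0" using orth[of "-1" 0 a "vconj b"] a cb by simp
  have cacb: "Sc Sm (vconj a) (vconj b) = 0" using orth[of 0 "-1" "vconj a" b] ca b by simp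
  have aa: "Sc Sm a a = 0" by (rule Sc_self0[OF sk])
  have caca: "Sc Sm (vconj a) (vconj a) = 0" by (rule Sc_self0[OF sk])
  have caa: "Sc Sm (vconj a) a = - Sc Sm a (vconj a)" by (rule Sc_skew[OF sk])
  have pos: "0 \<le> Re (\<i> powi (2*(-1)+1) * Sc Sm a (vconj a))"
    using posall a by blast
  have ipow: "\<i> powi (2*(-1)+1) = - \<i>" by (simp add: power_int_minus)
  show "Re (Sc Sm ((\<i>/2) *s (a - vconj a)) ((\<i>/2) *s (b - vconj b)))
         = Re (Sc Sm ((1/2) *s (a + vconj a)) ((1/2) *s (b + vconj b)))"
    by (simp add: Sc_add1 Sc_add2 Sc_diff1 Sc_diff2 Sc_smult1 Sc_smult2 ab cacb algebra_simps)
  show "0 \<le> Re (Sc Sm ((1/2) *s (a + vconj a)) ((\<i>/2) *s (a - vconj a)))"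
    using pos unfolding ipow
    by (simp add: Sc_add1 Sc_add2 Sc_diff1 Sc_diff2 Sc_smult1 Sc_smult2 aa caca caa algebra_simps)
qed




lemma blr_smult: "bounded_linear (\<lambda>v::complex^'r. c *s v)"
proof (rule bounded_linear_intro[where K="norm c"])
  show "c *s (x + y) = c *s x + c *s y" for x y :: "complex^'r" by (rule vector_add_ldistrib)
  show "c *s (r *\<^sub>R x) = r *\<^sub>R (c *s x)" for r and x :: "complex^'r" by (simp add: vec_eq_iff)
  show "norm (c *s x) \<le> norm x * norm c" for x :: "complex^'r" by (simp add: norm_smult_vec)
qed

lemma rep_deriv:
  assumes "\<And>i. i < k \<Longrightarrow> (e i has_derivative De i) (at x)"
  shows "((\<lambda>y. rep e k y A B) has_derivative
           (\<lambda>h. (\<Sum>i<k. A i *s De i h) + (\<Sum>i<k. B i *s vconj (De i h)))) (at x)"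
  unfolding rep_def
proof (rule has_derivative_add)
  show "((\<lambda>y. \<Sum>i<k. A i *s e i y) has_derivative (\<lambda>h. \<Sum>i<k. A i *s De i h)) (at x)"
  proof (rule has_derivative_sum)
    fix i assume "i \<in> {..<k}"
    then show "((\<lambda>y. A i *s e i y) has_derivative (\<lambda>h. A i *s De i h)) (at x)"
      by (intro bounded_linear.has_derivative[OF blr_smult] assms) simp
  qed
  show "((\<lambda>y. \<Sum>i<k. B i *s vconj (e i y)) has_derivative (\<lambda>h. \<Sum>i<k. B i *s vconj (De i h))) (at x)"
  proof (rule has_derivative_sum)
    fix i assume "i \<in> {..<k}"
    then show "((\<lambda>y. B i *s vconj (e i y)) has_derivative (\<lambda>h. B i *s vconj (De i h))) (at x)"
      by (intro bounded_linear.has_derivative[OF blr_smult] bounded_linear.has_derivative[OF bounded_linear_vconj] assms) simp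
  qed
qed

lemma conj_comb:
  fixes E Dea Deb :: "nat \<Rightarrow> complex^'r"
  assumes "Dnub = \<i> *s Dnua" "\<And>i. i < k \<Longrightarrow> Deb i = \<i> *s Dea i"
    "da = Dnua - (\<Sum>i<k. c i *s Dea i + pa i *s E i)"
    "db = Dnub - (\<Sum>i<k. c i *s Deb i + pb i *s E i)"
  shows "da + \<i> *s db = (\<Sum>i<k. (-(pa i + \<i> * pb i)) *s E i)"
proof -
  define A where "A = (\<Sum>i<k. c i *s Dea i)"
  define PA where "PA = (\<Sum>i<k. pa i *s E i)"
  define PB where "PB = (\<Sum>i<k. pb i *s E i)"
  have s2: "(\<Sum>i<k. c i *s Deb i + pb i *s E i) = \<i> *s A + PB"
  proof -
    have "(\<Sum>i<k. c i *s Deb i + pb i *s E i) = (\<Sum>i<k. \<i> *s (c i *s Dea i) + pb i *s E i)"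
      using assms(2) by (intro sum.cong refl) (simp add: vector_smult_assoc mult.commute)
    also have "\<dots> = \<i> *s A + PB" unfolding A_def PB_def by (simp add: sum.distrib sum_cmul[symmetric] vector_smult_assoc)
    finally show ?thesis .
  qed
  have s1: "(\<Sum>i<k. c i *s Dea i + pa i *s E i) = A + PA"
    unfolding A_def PA_def by (simp add: sum.distrib)
  have s3: "(\<Sum>i<k. (-(pa i + \<i> * pb i)) *s E i) = - PA - \<i> *s PB"
  proof -
    have "(\<Sum>i<k. (-(pa i + \<i> * pb i)) *s E i) = (\<Sum>i<k. - (pa i *s E i) - \<i> *s (pb i *s E i))"
      by (intro sum.cong refl) (simp add: vec_eq_iff algebra_simps)
    also have "\<dots> = - PA - \<i> *s PB"
      unfolding PA_def PB_def by (simp only: sum_subtractf sum_negf sum_cmul)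
    finally show ?thesis .
  qed
  show ?thesis unfolding assms(3,4) assms(1) s1 s2 s3
    by (simp add: vec_eq_iff algebra_simps)
qed




theorem theorem13p1:
  fixes U :: "(complex^'n) set"
    and H :: "int \<Rightarrow> complex^'n \<Rightarrow> (complex^'r) set"
    and Sm :: "real^'r^'r"
    and nu :: "complex^'n \<Rightarrow> complex^'r"
  assumes "vhs_wm1 U H"
    and "\<forall>x\<in>U. weak_polarization Sm (\<lambda>p. H p x)"
    and "normal_function_lift U H nu"
  shows "\<forall>x\<in>U. \<exists>D. ((\<lambda>y. flat_coord H y (nu y)) has_derivative D) (at x) \<and>
            (\<forall>u w. pullback_omega Sm D (\<i> *s u) (\<i> *s w) = pullback_omega Sm D u w) \<and>
            (\<forall>u. 0 \<le> pullback_omega Sm D u (\<i> *s u))"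
proof (intro ballI)
  fix x assume xU: "x \<in> U"
  note V = assms(1)[unfolded vhs_wm1_def]
  have hsU: "\<forall>y\<in>U. hodge_structure_wm1 (\<lambda>p. H p y)" using V by (elim conjE)
  have sub: "\<forall>p. holo_subbundle U (\<lambda>x. hodge_filt (\<lambda>q. H q x) p)" using V by (elim conjE)
  have griff: "\<forall>p W s x D v. open W \<and> W \<subseteq> U \<and> holo_on W s \<and>
        (\<forall>y\<in>W. s y \<in> hodge_filt (\<lambda>q. H q y) p) \<and> x \<in> W \<and> (s has_derivative D) (at x)
        \<longrightarrow> D v \<in> hodge_filt (\<lambda>q. H q x) (p - 1)" using V by (elim conjE)
  note NF = assms(3)[unfolded normal_function_lift_def]
  have holonu: "holo_on U nu" using NF by (rule conjunct1)
  have nuF: "\<forall>x\<in>U. \<forall>D. (nu has_derivative D) (at x) \<longrightarrow> (\<forall>v. D v \<in> hodge_filt (\<lambda>q. H q x) (-1))"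
    using NF by (rule conjunct2)
  have "\<forall>y\<in>U. \<exists>N. hsN (\<lambda>q. H q y) N" using hsU hs_obtain by blast
  from bchoice[OF this] obtain NN where NN: "\<forall>y\<in>U. hsN (\<lambda>q. H q y) (NN y)" by blast
  have hb: "holo_subbundle U (\<lambda>y. hodge_filt (\<lambda>q. H q y) 0)" using sub by (rule spec)
  from hb[unfolded holo_subbundle_def, rule_format, OF xU]
  obtain W k and e :: "nat \<Rightarrow> complex^'n \<Rightarrow> complex^'r" where
    W: "open W" "x \<in> W" "W \<subseteq> U" and holo: "\<forall>i<k. holo_on W (e i)"
    and span: "\<forall>y\<in>W. hodge_filt (\<lambda>q. H q y) 0 = {v. \<exists>c::nat \<Rightarrow> complex. v = (\<Sum>i<k. c i *s e i y)} \<and>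
               (\<forall>c::nat \<Rightarrow> complex. (\<Sum>i<k. c i *s e i y) = 0 \<longrightarrow> (\<forall>i<k. c i = 0))"
    by blast
  have hsW: "hsN (\<lambda>q. H q y) (NN y)" if "y \<in> W" for y using NN W(3) that by blast
  have spanW: "(\<Sum>i<k. c i *s e i y) \<in> hodge_filt (\<lambda>q. H q y) 0" if "y \<in> W" for y c
    using span that by blast
  have indep: "c i = 0" if "y \<in> W" "(\<Sum>i<k. c i *s e i y) = 0" "i < k" for y c i
    using span that by blast
  have inspan: "\<exists>c. v = (\<Sum>i<k. c i *s e i y)" if "y \<in> W" "v \<in> hodge_filt (\<lambda>q. H q y) 0" for y v
    using span that by blast
  have e_in: "e i y \<in> hodge_filt (\<lambda>q. H q y) 0" if "y \<in> W" "i < k" for y i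
  proof -
    have "(\<Sum>j<k. (if j = i then 1 else 0) *s e j y) = (\<Sum>j<k. if j = i then e j y else 0)"
      by (rule sum.cong) auto
    also have "\<dots> = e i y" using that(2) by (simp add: sum.delta)
    finally show ?thesis using spanW[OF that(1), of "\<lambda>j. if j = i then 1 else 0"] by simp
  qed
  have UNIQ: "a i = 0 \<and> b i = 0" if y: "y \<in> W" and r0: "rep e k y a b = 0" and i: "i < k" for y a b i
  proof -
    define f where "f = (\<Sum>i<k. a i *s e i y)"
    define g where "g = (\<Sum>i<k. b i *s vconj (e i y))"
    have fg: "g = - f" using r0 unfolding rep_def f_def g_def by (simp add: add_eq_0_iff2)
    have vg: "vconj g = (\<Sum>i<k. cnj (b i) *s e i y)" unfolding g_def by (simp add: vconj_sum vconj_smult)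
    have vgF: "vconj g \<in> hodge_filt (\<lambda>q. H q y) 0" unfolding vg by (rule spanW[OF y])
    have fF: "f \<in> hodge_filt (\<lambda>q. H q y) 0" unfolding f_def by (rule spanW[OF y])
    have "vconj f = - vconj g" using fg by (simp add: vconj_minus)
    then have vfF: "vconj f \<in> hodge_filt (\<lambda>q. H q y) 0" using hf_neg[OF hsW[OF y] vgF] by simp
    have f0: "f = 0" by (rule hs_F0_conj[OF hsW[OF y] fF vfF])
    have "a i = 0" using indep[OF y _ i, of a] f0 unfolding f_def by simp
    moreover have "cnj (b i) = 0" using indep[OF y _ i, of "\<lambda>i. cnj (b i)"] vg fg f0 by simp
    ultimately show ?thesis by simp
  qed
  have UNIQ2: "a i = a' i \<and> b i = b' i" if y: "y \<in> W" and eq: "rep e k y a b = rep e k y a' b'" and i: "i < k"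
    for y a b a' b' i
    using UNIQ[OF y _ i, of "\<lambda>i. a i - a' i" "\<lambda>i. b i - b' i"] eq by (simp add: rep_diff)
  have REP: "\<exists>ab. v = rep e k x (fst ab) (snd ab)" for v
  proof -
    obtain f h where fh: "v = f + h" "f \<in> hodge_filt (\<lambda>q. H q x) 0" "vconj h \<in> hodge_filt (\<lambda>q. H q x) 0"
      using hs_decomp[OF hsW[OF W(2)], of v] by blast
    obtain a where a: "f = (\<Sum>i<k. a i *s e i x)" using inspan[OF W(2) fh(2)] by blast
    obtain c where c: "vconj h = (\<Sum>i<k. c i *s e i x)" using inspan[OF W(2) fh(3)] by blast
    have "h = vconj (vconj h)" by simp
    also have "\<dots> = (\<Sum>i<k. cnj (c i) *s vconj (e i x))" unfolding c by (simp add: vconj_sum vconj_smult)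
    finally have "v = rep e k x a (\<lambda>i. cnj (c i))" unfolding rep_def using fh(1) a by simp
    then show ?thesis by (intro exI[of _ "(a, \<lambda>i. cnj (c i))"]) simp
  qed
  define cf where "cf v = (SOME ab. v = rep e k x (fst ab) (snd ab))" for v
  define A where "A v = fst (cf v)" for v
  define B where "B v = snd (cf v)" for v
  have cfrep: "v = rep e k x (A v) (B v)" for v
    unfolding A_def B_def cf_def using someI_ex[OF REP[of v]] .
  have cf_add: "A (u + w) i = A u i + A w i \<and> B (u + w) i = B u i + B w i" if "i < k" for u w i
  proof -
    have "rep e k x (A (u + w)) (B (u + w)) = rep e k x (\<lambda>i. A u i + A w i) (\<lambda>i. B u i + B w i)"
      unfolding rep_add using cfrep[of "u + w"] cfrep[of u] cfrep[of w] by simp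
    then show ?thesis using UNIQ2[OF W(2) _ that] by blast
  qed
  have cf_smult: "A (c *s u) i = c * A u i \<and> B (c *s u) i = c * B u i" if "i < k" for c u i
  proof -
    have "rep e k x (A (c *s u)) (B (c *s u)) = rep e k x (\<lambda>i. c * A u i) (\<lambda>i. c * B u i)"
      unfolding rep_smult using cfrep[of "c *s u"] cfrep[of u] by simp
    then show ?thesis using UNIQ2[OF W(2) _ that] by blast
  qed
  define L where "L y v = rep e k y (A v) (B v)" for y v
  have linL: "linear (L y)" for y
  proof (rule linearI)
    fix u w
    have "L y (u + w) = rep e k y (\<lambda>i. A u i + A w i) (\<lambda>i. B u i + B w i)"
      unfolding L_def by (rule rep_cong) (use cf_add in blast)
    then show "L y (u + w) = L y u + L y w" by (simp add: rep_add L_def)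
  next
    fix r :: real and u
    have "L y (r *\<^sub>R u) = rep e k y (\<lambda>i. complex_of_real r * A u i) (\<lambda>i. complex_of_real r * B u i)"
      unfolding L_def scaleR_smult by (rule rep_cong) (use cf_smult in blast)
    then show "L y (r *\<^sub>R u) = r *\<^sub>R L y u" by (simp add: rep_smult L_def scaleR_smult)
  qed
  have injL: "inj (L y)" if y: "y \<in> W" for y
  proof -
    have "v = 0" if "L y v = 0" for v
    proof -
      have z: "A v i = 0 \<and> B v i = 0" if "i < k" for i
        using UNIQ[OF y _ that, of "A v" "B v"] \<open>L y v = 0\<close> unfolding L_def by simp
      have "rep e k x (A v) (B v) = rep e k x (\<lambda>i. 0) (\<lambda>i. 0)" by (rule rep_cong) (use z in blast)
      then have "v = rep e k x (\<lambda>i. 0) (\<lambda>i. 0)" using cfrep[of v] by simp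
      then show ?thesis by (simp add: rep_zero)
    qed
    then show ?thesis using linear_injective_0[OF linL] by blast
  qed
  have "\<forall>i\<in>{..<k}. \<exists>D. (e i has_derivative D) (at x) \<and> (\<forall>c v. D (c *s v) = c *s D v)"
    using holo W(2) unfolding holo_on_def by blast
  from bchoice[OF this] obtain De where De: "\<forall>i\<in>{..<k}. (e i has_derivative De i) (at x) \<and> (\<forall>c v. De i (c *s v) = c *s De i v)"
    by blast
  have dDe: "(e i has_derivative De i) (at x)" if "i < k" for i using De that by blast
  have linDe: "De i (c *s v) = c *s De i v" if "i < k" for i c v using De that by blast
  obtain Dnu where dnu: "(nu has_derivative Dnu) (at x)" and linDnu: "\<forall>c v. Dnu (c *s v) = c *s Dnu v"
    using holonu xU unfolding holo_on_def by blast
  have dL: "((\<lambda>y. L y j) has_derivative (\<lambda>h. (\<Sum>i<k. A j i *s De i h) + (\<Sum>i<k. B j i *s vconj (De i h)))) (at x)" for j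
    unfolding L_def by (rule rep_deriv[OF dDe])
  obtain Dg where dg: "((\<lambda>y. inv (L y) (nu y)) has_derivative Dg) (at x)"
    using inv_family_deriv[OF W(1,2) linL injL dL dnu] by blast
  define g where "g y = inv (L y) (nu y)" for y
  have Lg: "L y (g y) = nu y" if "y \<in> W" for y
  proof -
    have "surj (L y)" using linL[of y] injL[OF that] by (simp add: linear_injective_imp_surjective)
    then show ?thesis unfolding g_def by (simp add: surj_f_inv_f)
  qed
  have linA: "linear (\<lambda>v. A v i)" if "i < k" for i
  proof (rule linearI)
    show "A (u + w) i = A u i + A w i" for u w using cf_add[OF that] by blast
    show "A (r *\<^sub>R u) i = r *\<^sub>R A u i" for r u
      using cf_smult[OF that] by (simp add: scaleR_smult scaleR_conv_of_real)
  qed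
  have linB: "linear (\<lambda>v. B v i)" if "i < k" for i
  proof (rule linearI)
    show "B (u + w) i = B u i + B w i" for u w using cf_add[OF that] by blast
    show "B (r *\<^sub>R u) i = r *\<^sub>R B u i" for r u
      using cf_smult[OF that] by (simp add: scaleR_smult scaleR_conv_of_real)
  qed
  define cc where "cc i y = A (g y) i - cnj (B (g y) i)" for i y
  define Dcc where "Dcc i h = A (Dg h) i - cnj (B (Dg h) i)" for i h
  have dcc: "(cc i has_derivative Dcc i) (at x)" if "i < k" for i
  proof -
    have dg': "(g has_derivative Dg) (at x)" using dg unfolding g_def .
    have blA: "bounded_linear (\<lambda>v. A v i)" using linA[OF that] by (simp add: linear_conv_bounded_linear)
    have blB: "bounded_linear (\<lambda>v. B v i)" using linB[OF that] by (simp add: linear_conv_bounded_linear)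
    have d1: "((\<lambda>y. A (g y) i) has_derivative (\<lambda>h. A (Dg h) i)) (at x)"
      by (rule bounded_linear.has_derivative[OF blA dg'])
    have d2: "((\<lambda>y. B (g y) i) has_derivative (\<lambda>h. B (Dg h) i)) (at x)"
      by (rule bounded_linear.has_derivative[OF blB dg'])
    have d3: "((\<lambda>y. cnj (B (g y) i)) has_derivative (\<lambda>h. cnj (B (Dg h) i))) (at x)"
      by (rule bounded_linear.has_derivative[OF bounded_linear_cnj d2])
    show ?thesis unfolding cc_def Dcc_def by (rule has_derivative_diff[OF d1 d3])
  qed
  define phi where "phi y = (\<Sum>i<k. cc i y *s e i y)" for y
  define D where "D h = Dnu h - (\<Sum>i<k. cc i x *s De i h + Dcc i h *s e i x)" for h
  have dphi: "(phi has_derivative (\<lambda>h. \<Sum>i<k. cc i x *s De i h + Dcc i h *s e i x)) (at x)"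
    unfolding phi_def
  proof (rule has_derivative_sum)
    fix i assume "i \<in> {..<k}"
    then have i: "i < k" by simp
    show "((\<lambda>y. cc i y *s e i y) has_derivative (\<lambda>h. cc i x *s De i h + Dcc i h *s e i x)) (at x)"
      using bounded_bilinear.FDERIV[OF bounded_bilinear_smult dcc[OF i] dDe[OF i]] by simp
  qed
  have dR: "((\<lambda>y. nu y - phi y) has_derivative D) (at x)"
    unfolding D_def by (rule has_derivative_diff[OF dnu dphi])
  have realW: "nu y - phi y \<in> real_vecs" and eqW: "flat_coord H y (nu y) = nu y - phi y" if y: "y \<in> W" for y
  proof -
    define a where "a = A (g y)"
    define b where "b = B (g y)"
    define hh where "hh = (\<Sum>i<k. b i *s vconj (e i y))"
    have nuy: "nu y = (\<Sum>i<k. a i *s e i y) + hh"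
      using Lg[OF y] unfolding L_def rep_def a_def b_def hh_def by simp
    have vhh: "vconj hh = (\<Sum>i<k. cnj (b i) *s e i y)" unfolding hh_def by (simp add: vconj_sum vconj_smult)
    have ph: "phi y = (\<Sum>i<k. a i *s e i y) - vconj hh"
      unfolding phi_def cc_def vhh a_def b_def by (simp add: vector_sub_rdistrib sum_subtractf)
    have R: "nu y - phi y = hh + vconj hh" unfolding nuy ph by simp
    show real: "nu y - phi y \<in> real_vecs" unfolding R real_vecs_iff by (simp add: vconj_add add.commute)
    have "nu y - (nu y - phi y) \<in> hodge_filt (\<lambda>q. H q y) 0"
      unfolding phi_def by (simp add: spanW[OF y])
    then show "flat_coord H y (nu y) = nu y - phi y"
      using flat_coord_eq[of H y "NN y" "nu y - phi y" "nu y"] hsW[OF y] real by blast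
  qed
  have dflat: "((\<lambda>y. flat_coord H y (nu y)) has_derivative D) (at x)"
    by (rule has_derivative_transform_within_open[OF dR W(1,2)]) (simp add: eqW)
  have Dreal: "D h \<in> real_vecs" for h by (rule deriv_real[OF W(1,2) realW dR])
  have hsx: "hsN (\<lambda>q. H q x) (NN x)" by (rule hsW[OF W(2)])
  have DF: "D h \<in> hodge_filt (\<lambda>q. H q x) (-1)" for h
  proof -
    have t1: "Dnu h \<in> hodge_filt (\<lambda>q. H q x) (-1)" using nuF xU dnu by blast
    have t2: "cc i x *s De i h + Dcc i h *s e i x \<in> hodge_filt (\<lambda>q. H q x) (-1)" if i: "i < k" for i
    proof -
      have "De i h \<in> hodge_filt (\<lambda>q. H q x) (0 - 1)"
        using griff[rule_format, of W "e i" 0 x "De i" h] W holo i dDe[OF i] e_in by blast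
      then have a1: "cc i x *s De i h \<in> hodge_filt (\<lambda>q. H q x) (-1)" by (simp add: hf_smult[OF hsx])
      have a2: "Dcc i h *s e i x \<in> hodge_filt (\<lambda>q. H q x) (-1)"
        using hf_mono[OF hsx _ e_in[OF W(2) i], of "-1"] hf_smult[OF hsx] by simp
      show ?thesis by (rule hf_add[OF hsx a1 a2])
    qed
    have "(\<Sum>i<k. cc i x *s De i h + Dcc i h *s e i x) \<in> hodge_filt (\<lambda>q. H q x) (-1)"
      by (rule hf_sum[OF hsx]) (use t2 in simp)
    then show ?thesis unfolding D_def by (rule hf_diff[OF hsx t1])
  qed
  define av where "av u = D u - \<i> *s D (\<i> *s u)" for u
  have aH: "av u \<in> H (-1) x" for u
  proof -
    have a1: "av u \<in> hodge_filt (\<lambda>q. H q x) (-1)"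
      unfolding av_def by (rule hf_diff[OF hsx DF hf_smult[OF hsx DF]])
    have "vconj (av u) = D u + \<i> *s D (\<i> *s u)"
      using Dreal[of u] Dreal[of "\<i> *s u"] unfolding av_def
      by (simp add: vconj_diff vconj_smult real_vecs_iff)
    also have "\<dots> = (\<Sum>i<k. (-(Dcc i u + \<i> * Dcc i (\<i> *s u))) *s e i x)"
      by (rule conj_comb[where Dnua="Dnu u" and Dnub="Dnu (\<i> *s u)" and Dea="\<lambda>i. De i u"
            and Deb="\<lambda>i. De i (\<i> *s u)" and c="\<lambda>i. cc i x"])
         (simp_all add: linDnu linDe D_def)
    finally have eqv: "vconj (av u) = (\<Sum>i<k. (-(Dcc i u + \<i> * Dcc i (\<i> *s u))) *s e i x)" .
    have "vconj (av u) \<in> hodge_filt (\<lambda>q. H q x) 0" unfolding eqv by (rule spanW[OF W(2)])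
    then show ?thesis using hs_Fm1_conj[OF hsx a1] by simp
  qed
  have half: "D u = (1/2) *s (av u + vconj (av u))" "D (\<i> *s u) = (\<i>/2) *s (av u - vconj (av u))" for u
    using halves[OF Dreal[of u] Dreal[of "\<i> *s u"]] unfolding av_def by simp_all
  have wpx: "weak_polarization Sm (\<lambda>p. H p x)" using assms(2) xU by blast
  show "\<exists>D. ((\<lambda>y. flat_coord H y (nu y)) has_derivative D) (at x) \<and>
            (\<forall>u w. pullback_omega Sm D (\<i> *s u) (\<i> *s w) = pullback_omega Sm D u w) \<and>
            (\<forall>u. 0 \<le> pullback_omega Sm D u (\<i> *s u))"
  proof (intro exI conjI allI)
    show "((\<lambda>y. flat_coord H y (nu y)) has_derivative D) (at x)" by (rule dflat)
    fix u w
    show "pullback_omega Sm D (\<i> *s u) (\<i> *s w) = pullback_omega Sm D u w"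
      unfolding pullback_omega_def half(2)[of u] half(2)[of w] half(1)[of u] half(1)[of w]
      by (rule final_alg(1)[OF wpx hsx aH aH])
  next
    fix u
    show "0 \<le> pullback_omega Sm D u (\<i> *s u)"
      unfolding pullback_omega_def half(2)[of u] half(1)[of u]
      by (rule final_alg(2)[OF wpx hsx aH aH])
  qed
qed


end
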